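(* Let $t \ge 0$ and consider the three-taxon multispecies coalescent described in the context, with species tree of topology $AB|C$ and internal branch length $t$, and $L$ independent loci. For $XY\in\{AB,AC,BC\}$ let $N_{XY}$ be the number of loci whose gene-tree topology is $XY|Z$ (where $Z$ is the remaining species). Let $\mathbb{P}_L$ be the probability of the failure event of the $R^*$/STAR/MDC method, namely $N_{AB} < \max\{N_{AC},N_{BC}\}$. Then the limit $\alpha_{R^*}(t)=-\lim_{L\to\infty}\frac1L\ln\mathbb{P}_L$ exists and $$\alpha_{R^*}(t) = -\ln\left(2\sqrt{\tfrac13 e^{-t}\left(1-\tfrac23 e^{-t}\right)} + \tfrac13 e^{-t}\right).$$ Moreover, as $t\to0$, $\alpha_{R^*}(t)=\frac34 t^2+O(t^3)$, and as $t\to+\infty$, $\alpha_{R^*}(t) - \frac{t}{2} \to -\frac12\ln\frac43$.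
   Context: Multispecies coalescent, three-taxon case: ultrametric rooted species tree on species $A,B,C$ with topology $AB|C$, equal population sizes, time in units of $N$ generations. Populations $A,B,C$, ancestral population $AB$ existing between divergence times $\tau_{AB}$ and $\tau_{ABC}$, and root population $ABC$ above $\tau_{ABC}$; $t=\tau_{ABC}-\tau_{AB}$. For each locus one lineage is sampled from each of $A,B,C$; backwards in time, each pair of lineages in the same population coalesces independently at rate $1$. Loci are independent. Thus with probability $1-e^{-t}$ the $A$ and $B$ lineages coalesce in population $AB$ (gene tree topology $AB|C$), and with probability $e^{-t}$ they do not, in which case each of the three topologies $AB|C$, $AC|B$, $BC|A$ occurs with probability $1/3$. Gene trees are known exactly. The $R^*$ consensus, STAR and MDC methods all output the most frequent gene-tree topology in this three-taxon setting. *)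

theory Defs
  imports "HOL-Probability.Probability" "HOL-Library.Landau_Symbols"
begin

text \<open>Rooted gene-tree topologies on three taxa A, B, C:
  AB means AB|C, AC means AC|B, BC means BC|A.\<close>
datatype topo = AB | AC | BC

text \<open>Gene-tree topology distribution at one locus under the three-taxon
  multispecies coalescent with species tree AB|C and internal branch length t:
  with probability 1 - exp(-t) the A and B lineages coalesce in population AB
  (topology AB|C); otherwise each of the three topologies has probability 1/3.\<close>
definition gene_tree_pmf :: "real \<Rightarrow> topo pmf" where
  "gene_tree_pmf t =
     bind_pmf (bernoulli_pmf (1 - exp (- t)))
       (\<lambda>c. if c then return_pmf AB else pmf_of_set {AB, AC, BC})"

definition N :: "topo \<Rightarrow> topo list \<Rightarrow> nat" where
  "N xy gs = length (filter (\<lambda>g. g = xy) gs)"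

definition fail_prob :: "real \<Rightarrow> nat \<Rightarrow> real" where
  "fail_prob t L =
     measure_pmf.prob (replicate_pmf L (gene_tree_pmf t))
       {gs. N AB gs < max (N AC gs) (N BC gs)}"

definition alpha_Rstar :: "real \<Rightarrow> real" where
  "alpha_Rstar t =
     - ln (2 * sqrt (1/3 * exp (- t) * (1 - 2/3 * exp (- t))) + 1/3 * exp (- t))"

end

theory Submission imports Defs "HOL-Real_Asymp.Real_Asymp" begin

lemma UNIV_topo: "(UNIV :: topo set) = {AB, AC, BC}"
  using topo.exhaust by auto

lemma sum_topo: "(\<Sum>g\<in>UNIV. h g) = h AB + h AC + h BC"
  by (simp add: UNIV_topo add_ac)

definition LS :: "nat \<Rightarrow> topo list set" where
  "LS n = {xs. set xs \<subseteq> UNIV \<and> length xs = n}"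

lemma finite_LS: "finite (LS n)"
  unfolding LS_def by (rule finite_lists_length_eq) (simp add: UNIV_topo)

lemma LS_Suc: "LS (Suc n) = (\<lambda>(x,xs). x # xs) ` (UNIV \<times> LS n)"
  unfolding LS_def by (auto simp: length_Suc_conv image_iff)

lemma sum_LS_prod: "(\<Sum>xs\<in>LS n. prod_list (map (u::topo\<Rightarrow>real) xs)) = (\<Sum>g\<in>UNIV. u g) ^ n"
proof (induction n)
  case 0
  have "LS 0 = {[]}" unfolding LS_def by auto
  then show ?case by simp
next
  case (Suc n)
  have inj: "inj_on (\<lambda>(x,xs). x # xs) (UNIV \<times> LS n)"
    by (auto simp: inj_on_def)
  have "(\<Sum>xs\<in>LS (Suc n). prod_list (map u xs))
      = (\<Sum>p\<in>UNIV \<times> LS n. u (fst p) * prod_list (map u (snd p)))"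
    unfolding LS_Suc by (subst sum.reindex[OF inj]) (auto intro!: sum.cong)
  also have "\<dots> = (\<Sum>g\<in>UNIV. u g) * (\<Sum>xs\<in>LS n. prod_list (map u xs))"
  proof -
    have "(\<Sum>p\<in>UNIV \<times> LS n. u (fst p) * prod_list (map u (snd p)))
        = (\<Sum>g\<in>UNIV. \<Sum>xs\<in>LS n. u g * prod_list (map u xs))"
      by (subst sum.cartesian_product) (simp add: case_prod_unfold)
    also have "\<dots> = (\<Sum>g\<in>UNIV. u g) * (\<Sum>xs\<in>LS n. prod_list (map u xs))"
      by (rule sum_product[symmetric])
    finally show ?thesis .
  qed
  finally show ?case using Suc by simp
qed

lemma pmf_replicate:
  "pmf (replicate_pmf n p) xs = (if length xs = n then prod_list (map (pmf p) xs) else 0)"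
proof (induction n arbitrary: xs)
  case 0
  then show ?case by (simp add: indicator_def)
next
  case (Suc n)
  have eq: "replicate_pmf (Suc n) p = map_pmf (\<lambda>(x,xs). x # xs) (pair_pmf p (replicate_pmf n p))"
    by (simp add: pair_pmf_def map_bind_pmf bind_assoc_pmf bind_return_pmf map_pmf_def)
  have inj: "inj (\<lambda>(x::'a,xs). x # xs)" by (auto simp: inj_def)
  show ?case
  proof (cases xs)
    case Nil
    have "xs \<notin> set_pmf (replicate_pmf (Suc n) p)" using Nil by (simp add: set_replicate_pmf)
    then have "pmf (replicate_pmf (Suc n) p) xs = 0" by (meson set_pmf_iff)
    then show ?thesis using Nil by simp
  next
    case (Cons y ys)
    have "pmf (replicate_pmf (Suc n) p) xs = pmf (pair_pmf p (replicate_pmf n p)) (y, ys)"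
      unfolding eq Cons using pmf_map_inj'[OF inj, of _ "(y,ys)"] by simp
    also have "\<dots> = pmf p y * pmf (replicate_pmf n p) ys" by (simp add: pmf_pair)
    finally show ?thesis using Suc Cons by simp
  qed
qed

lemma prob_replicate:
  "measure_pmf.prob (replicate_pmf n p) S = (\<Sum>xs\<in>{xs\<in>LS n. xs \<in> S}. prod_list (map (pmf p) xs))"
proof -
  have "measure_pmf.prob (replicate_pmf n p) S = measure_pmf.prob (replicate_pmf n p) {xs\<in>LS n. xs \<in> S}"
  proof -
    have "S \<inter> set_pmf (replicate_pmf n p) = {xs\<in>LS n. xs \<in> S} \<inter> set_pmf (replicate_pmf n p)"
      by (auto simp: set_replicate_pmf LS_def)
    then show ?thesis by (metis measure_Int_set_pmf)
  qed
  also have "\<dots> = (\<Sum>xs\<in>{xs\<in>LS n. xs \<in> S}. pmf (replicate_pmf n p) xs)"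
    by (rule measure_measure_pmf_finite) (simp add: finite_LS)
  also have "\<dots> = (\<Sum>xs\<in>{xs\<in>LS n. xs \<in> S}. prod_list (map (pmf p) xs))"
    by (intro sum.cong) (auto simp: pmf_replicate LS_def)
  finally show ?thesis .
qed

lemma pmf_gene:
  assumes "t \<ge> 0"
  shows "pmf (gene_tree_pmf t) AB = 1 - 2/3 * exp (-t)"
    "pmf (gene_tree_pmf t) AC = 1/3 * exp (-t)"
    "pmf (gene_tree_pmf t) BC = 1/3 * exp (-t)"
proof -
  have "exp (-t) \<le> 1" using assms by simp
  then have p: "0 \<le> 1 - exp (-t)" "1 - exp (-t) \<le> 1" by auto
  show "pmf (gene_tree_pmf t) AB = 1 - 2/3 * exp (-t)"
    "pmf (gene_tree_pmf t) AC = 1/3 * exp (-t)"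
    "pmf (gene_tree_pmf t) BC = 1/3 * exp (-t)"
    unfolding gene_tree_pmf_def using p
    by (simp_all add: pmf_bind integral_bernoulli_pmf pmf_of_set indicator_def card_insert_if)
qed

lemma N_simps[simp]: "N X [] = 0" "N X (x # xs) = (if x = X then 1 else 0) + N X xs"
  "N X (xs @ ys) = N X xs + N X ys"
  by (simp_all add: N_def)

lemma prod_list_mult: "prod_list (map (\<lambda>g. (u g::real) * v g) xs) = prod_list (map u xs) * prod_list (map v xs)"
  by (induction xs) simp_all

lemma prod_list_nonneg': "(\<And>g. (u g::real) \<ge> 0) \<Longrightarrow> prod_list (map u xs) \<ge> 0"
  by (induction xs) simp_all

lemma prod_f:
  assumes "X \<noteq> Y"
  shows "prod_list (map (\<lambda>g. if g = X then z else if g = Y then 1/z else (1::real)) xs)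
       = z ^ N X xs * (1/z) ^ N Y xs"
  using assms by (induction xs) (auto simp: power_add)

lemma chernoff:
  assumes "X \<noteq> Y" "(z::real) \<ge> 1" "\<And>g. w g \<ge> 0"
  defines "f \<equiv> (\<lambda>g. if g = X then z else if g = Y then 1/z else (1::real))"
  shows "(\<Sum>xs\<in>{xs\<in>LS n. N Y xs < N X xs}. prod_list (map w xs)) \<le> (\<Sum>g\<in>UNIV. w g * f g) ^ n"
proof -
  have fpos: "f g \<ge> 0" for g using assms(2) unfolding f_def by auto
  have "(\<Sum>xs\<in>{xs\<in>LS n. N Y xs < N X xs}. prod_list (map w xs))
     \<le> (\<Sum>xs\<in>{xs\<in>LS n. N Y xs < N X xs}. prod_list (map (\<lambda>g. w g * f g) xs))"
  proof (intro sum_mono)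
    fix xs assume "xs \<in> {xs\<in>LS n. N Y xs < N X xs}"
    then have lt: "N Y xs \<le> N X xs" by auto
    have "prod_list (map f xs) = z ^ N X xs * (1/z) ^ N Y xs"
      unfolding f_def using prod_f[OF assms(1)] by simp
    also have "\<dots> = z ^ (N X xs - N Y xs)"
      using lt assms(2) by (simp add: power_diff power_one_over field_simps)
    also have "\<dots> \<ge> 1" using assms(2) by simp
    finally have "prod_list (map f xs) \<ge> 1" .
    then show "prod_list (map w xs) \<le> prod_list (map (\<lambda>g. w g * f g) xs)"
      unfolding prod_list_mult
      using prod_list_nonneg'[of w xs] assms(3) by (simp add: mult_le_cancel_left1)
  qed
  also have "\<dots> \<le> (\<Sum>xs\<in>LS n. prod_list (map (\<lambda>g. w g * f g) xs))"
    by (intro sum_mono2 finite_LS) (auto intro!: prod_list_nonneg' mult_nonneg_nonneg assms(3) fpos)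
  also have "\<dots> = (\<Sum>g\<in>UNIV. w g * f g) ^ n" by (rule sum_LS_prod)
  finally show ?thesis .
qed

lemma N_le: "N AB xs + N AC xs \<le> length xs"
  by (induction xs) auto

fun swp :: "topo \<Rightarrow> topo" where
  "swp AB = AC" | "swp AC = AB" | "swp BC = BC"

lemma swp_swp[simp]: "swp (swp x) = x" by (cases x) auto

lemma N_swp: "N AC (map swp ys) = N AB ys" "N AB (map swp ys) = N AC ys"
  by (induction ys) (auto elim: swp.elims)

lemma LS_len: "xs \<in> LS n \<longleftrightarrow> length xs = n" unfolding LS_def by auto

lemma sym_lower_aux:
  fixes w :: "topo \<Rightarrow> real"
  assumes wAB: "w AB = a" and wAC: "w AC = a" and nn: "\<And>g. w g \<ge> 0" and tot: "2*a + w BC = 1"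
    and tw: "N AC tw = N AB tw + 1"
  shows "(\<Sum>xs\<in>{xs\<in>LS (2*m + length tw). N AC xs = N AB xs + 1}. prod_list (map w xs))
           \<ge> prod_list (map w tw) / (2*m+1)"
proof -
  define D where "D xs = int (N AC xs) - int (N AB xs)" for xs
  define Q where "Q s = (\<Sum>xs\<in>{xs\<in>LS m. D xs = s}. prod_list (map w xs))" for s
  define T where "T = {-int m..int m}"
  have finT: "finite T" unfolding T_def by simp
  have cardT: "card T = 2*m+1" unfolding T_def by simp
  have DT: "D ` LS m \<subseteq> T"
  proof
    fix s assume "s \<in> D ` LS m"
    then obtain xs where "xs \<in> LS m" "s = D xs" by auto
    then show "s \<in> T" using N_le[of xs] unfolding T_def D_def LS_len by auto
  qed
  have sumQ: "(\<Sum>s\<in>T. Q s) = 1"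
  proof -
    have "(\<Sum>s\<in>T. Q s) = (\<Sum>xs\<in>LS m. prod_list (map w xs))"
      unfolding Q_def by (rule sum.group[OF finite_LS finT DT])
    also have "\<dots> = 1" by (simp add: sum_LS_prod sum_topo wAB wAC tot)
    finally show ?thesis .
  qed
  have CS: "(\<Sum>s\<in>T. Q s * Q s) \<ge> 1 / (2*m+1)"
  proof -
    define k where "k = real (2*m+1)"
    have kpos: "k > 0" unfolding k_def by simp
    have "0 \<le> (\<Sum>s\<in>T. (Q s - 1/k)^2)" by (simp add: sum_nonneg)
    also have "\<dots> = (\<Sum>s\<in>T. Q s * Q s) - 2/k * (\<Sum>s\<in>T. Q s) + card T / k^2"
      by (simp add: power2_eq_square algebra_simps sum.distrib sum_subtractf sum_distrib_left sum_divide_distrib sum_distrib_right)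
    also have "\<dots> = (\<Sum>s\<in>T. Q s * Q s) - 1/k"
      using kpos unfolding sumQ cardT k_def[symmetric] by (simp add: power2_eq_square field_simps)
    finally show ?thesis unfolding k_def by simp
  qed
  define PS where "PS = {p\<in>LS m \<times> LS m. D (fst p) = D (snd p)}"
  have finPS: "finite PS" unfolding PS_def using finite_LS by auto
  have pairsum: "(\<Sum>p\<in>PS. prod_list (map w (fst p)) * prod_list (map w (snd p))) = (\<Sum>s\<in>T. Q s * Q s)"
  proof -
    have "(\<Sum>p\<in>PS. prod_list (map w (fst p)) * prod_list (map w (snd p)))
        = (\<Sum>s\<in>T. \<Sum>p\<in>{p\<in>PS. D (fst p) = s}. prod_list (map w (fst p)) * prod_list (map w (snd p)))"
      by (rule sum.group[symmetric, OF finPS finT]) (use DT in \<open>auto simp: PS_def\<close>)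
    also have "\<dots> = (\<Sum>s\<in>T. Q s * Q s)"
    proof (intro sum.cong refl)
      fix s
      have "{p\<in>PS. D (fst p) = s} = {xs\<in>LS m. D xs = s} \<times> {xs\<in>LS m. D xs = s}"
        unfolding PS_def by auto
      then show "(\<Sum>p\<in>{p\<in>PS. D (fst p) = s}. prod_list (map w (fst p)) * prod_list (map w (snd p))) = Q s * Q s"
        unfolding Q_def by (simp add: sum_product sum.cartesian_product case_prod_unfold)
    qed
    finally show ?thesis .
  qed
  define h where "h p = fst p @ map swp (snd p) @ tw" for p
  have wswp: "w (swp g) = w g" for g using wAB wAC by (cases g) auto
  have prodh: "prod_list (map w (h p)) = prod_list (map w (fst p)) * prod_list (map w (snd p)) * prod_list (map w tw)" for p
  proof -
    have "w \<circ> swp = w" by (rule ext) (simp add: wswp)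
    then have "map w (map swp (snd p)) = map w (snd p)" by (simp only: map_map)
    then have "prod_list (map w (map swp (snd p))) = prod_list (map w (snd p))" by (simp only:)
    then show ?thesis unfolding h_def by (simp only: map_append prod_list.append mult_ac)
  qed
  have injh: "inj_on h PS"
  proof (rule inj_onI)
    fix p q assume "p \<in> PS" "q \<in> PS" "h p = h q"
    then have l: "length (fst p) = length (fst q)" "length (snd p) = length (snd q)"
      unfolding PS_def by (auto simp: LS_len)
    from \<open>h p = h q\<close> have "fst p = fst q \<and> map swp (snd p) = map swp (snd q)"
      unfolding h_def using l by auto
    then have "fst p = fst q" "snd p = snd q"
      by (auto dest: arg_cong[where f="map swp"] simp: comp_def)
    then show "p = q" by (simp add: prod_eq_iff)
  qed
  have himg: "h ` PS \<subseteq> {xs\<in>LS (2*m + length tw). N AC xs = N AB xs + 1}"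
  proof
    fix x assume "x \<in> h ` PS"
    then obtain p where p: "p \<in> PS" "x = h p" by auto
    then show "x \<in> {xs\<in>LS (2*m + length tw). N AC xs = N AB xs + 1}"
      unfolding h_def PS_def D_def using tw by (auto simp: LS_len N_swp)
  qed
  have "prod_list (map w tw) / (2*m+1) \<le> prod_list (map w tw) * (\<Sum>s\<in>T. Q s * Q s)"
    using CS prod_list_nonneg'[of w tw, OF nn]
    by (metis divide_inverse mult_left_mono inverse_eq_divide)
  also have "\<dots> = (\<Sum>p\<in>PS. prod_list (map w (h p)))"
    unfolding pairsum[symmetric] prodh by (simp add: sum_distrib_left mult_ac)
  also have "\<dots> = (\<Sum>xs\<in>h ` PS. prod_list (map w xs))"
    by (rule sum.reindex[OF injh, symmetric, unfolded comp_def])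
  also have "\<dots> \<le> (\<Sum>xs\<in>{xs\<in>LS (2*m + length tw). N AC xs = N AB xs + 1}. prod_list (map w xs))"
    by (intro sum_mono2 himg) (auto simp: finite_LS intro!: prod_list_nonneg' nn)
  finally show ?thesis .
qed

lemma sym_lower:
  fixes w :: "topo \<Rightarrow> real"
  assumes wAB: "w AB = a" and wAC: "w AC = a" and nn: "\<And>g. w g \<ge> 0" and tot: "2*a + w BC = 1"
    and n: "n \<ge> 1"
  shows "(\<Sum>xs\<in>{xs\<in>LS n. N AC xs = N AB xs + 1}. prod_list (map w xs)) \<ge> a * w BC / (n+1)"
proof -
  have a0: "a \<ge> 0" using nn[of AB] wAB by simp
  have b1: "w BC \<le> 1" using tot a0 by simp
  have b0: "w BC \<ge> 0" using nn by simp
  show ?thesis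
  proof (cases "odd n")
    case True
    define m where "m = n div 2"
    have m: "n = 2*m + length [AC]" using True unfolding m_def by simp
    have "a * w BC / (n+1) \<le> a / (n+1)"
      using a0 b0 b1 by (intro divide_right_mono) (auto simp: mult_left_le)
    also have "\<dots> \<le> a / (2*m+1)"
      using m a0 by (intro divide_left_mono) auto
    also have "\<dots> \<le> (\<Sum>xs\<in>{xs\<in>LS n. N AC xs = N AB xs + 1}. prod_list (map w xs))"
      using sym_lower_aux[OF wAB wAC nn tot, of "[AC]" m] m wAC by simp
    finally show ?thesis .
  next
    case False
    define m where "m = n div 2 - 1"
    have m: "n = 2*m + length [AC,BC]" using False n unfolding m_def by simp presburger
    have "a * w BC / (n+1) \<le> a * w BC / (2*m+1)"
      using m a0 b0 by (intro divide_left_mono) auto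
    also have "\<dots> \<le> (\<Sum>xs\<in>{xs\<in>LS n. N AC xs = N AB xs + 1}. prod_list (map w xs))"
      using sym_lower_aux[OF wAB wAC nn tot, of "[AC,BC]" m] m wAC by simp
    finally show ?thesis .
  qed
qed

lemma sqrt_helpers:
  fixes p1 p2 :: real assumes "p1 > 0" "p2 > 0"
  shows "p1 * (1 / sqrt (p1/p2)) = sqrt (p2*p1)" "p2 * sqrt (p1/p2) = sqrt (p2*p1)"
proof -
  have s1: "p1 = sqrt p1 * sqrt p1" "p2 = sqrt p2 * sqrt p2" using assms by simp_all
  have "sqrt p1 > 0" "sqrt p2 > 0" using assms by simp_all
  then show "p1 * (1 / sqrt (p1/p2)) = sqrt (p2*p1)" "p2 * sqrt (p1/p2) = sqrt (p2*p1)"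
    by (subst (1) s1; simp add: real_sqrt_divide real_sqrt_mult field_simps)+
qed

lemma bounds:
  fixes t :: real assumes t: "t \<ge> 0"
  defines "e \<equiv> exp (-t)"
  defines "\<rho> \<equiv> 2 * sqrt (1/3 * e * (1 - 2/3 * e)) + 1/3 * e"
  shows "\<exists>c>0. \<rho> > 0 \<and> (\<forall>L\<ge>1. c * \<rho>^L / (L+1) \<le> fail_prob t L \<and> fail_prob t L \<le> 2 * \<rho>^L)"
proof -
  define p1 where "p1 = 1 - 2/3 * e"
  define p2 where "p2 = 1/3 * e"
  define w where "w = pmf (gene_tree_pmf t)"
  have e0: "e > 0" "e \<le> 1" unfolding e_def using t by auto
  have p: "p1 > 0" "p2 > 0" "p2 \<le> p1" unfolding p1_def p2_def using e0 by auto
  have w: "w AB = p1" "w AC = p2" "w BC = p2" unfolding w_def p1_def p2_def e_def using pmf_gene[OF t] by auto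
  have wnn: "w g \<ge> 0" for g unfolding w_def by simp
  have rho: "\<rho> = 2 * sqrt (p2*p1) + p2" unfolding \<rho>_def p1_def p2_def by simp
  have rpos: "\<rho> > 0" unfolding rho using p by (simp add: add_pos_nonneg)
  define z where "z = sqrt (p1/p2)"
  have z1: "z \<ge> 1" unfolding z_def using p by simp
  have zpos: "z > 0" using z1 by simp
  have hz: "p1 * (1/z) = sqrt (p2*p1)" "p2 * z = sqrt (p2*p1)" unfolding z_def using sqrt_helpers[OF p(1,2)] by auto
  define f where "f = (\<lambda>g. if g = AC then z else if g = AB then 1/z else (1::real))"
  define f' where "f' = (\<lambda>g. if g = BC then z else if g = AB then 1/z else (1::real))"
  have sf: "(\<Sum>g\<in>UNIV. w g * f g) = \<rho>" unfolding f_def sum_topo rho using w hz by simp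
  have sf': "(\<Sum>g\<in>UNIV. w g * f' g) = \<rho>" unfolding f'_def sum_topo rho using w hz by simp
  have FP: "fail_prob t L = (\<Sum>xs\<in>{xs\<in>LS L. N AB xs < max (N AC xs) (N BC xs)}. prod_list (map w xs))" for L
    unfolding fail_prob_def prob_replicate w_def by simp
  have up: "fail_prob t L \<le> 2 * \<rho>^L" for L
  proof -
    let ?S = "\<lambda>P. (\<Sum>xs\<in>{xs\<in>LS L. P xs}. prod_list (map w xs))"
    have "fail_prob t L \<le> ?S (\<lambda>xs. N AB xs < N AC xs \<or> N AB xs < N BC xs)"
      unfolding FP by (simp add: less_max_iff_disj)
    also have "\<dots> \<le> ?S (\<lambda>xs. N AB xs < N AC xs) + ?S (\<lambda>xs. N AB xs < N BC xs)"
    proof -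
      have eq: "{xs\<in>LS L. N AB xs < N AC xs \<or> N AB xs < N BC xs} = {xs\<in>LS L. N AB xs < N AC xs} \<union> {xs\<in>LS L. N AB xs < N BC xs}" by auto
      show ?thesis unfolding eq
        by (subst sum_Un) (auto intro!: prod_list_nonneg' wnn sum_nonneg simp: finite_LS)
    qed
    also have "\<dots> \<le> \<rho>^L + \<rho>^L"
      using chernoff[of AC AB z w L] chernoff[of BC AB z w L] z1 wnn sf sf'
      unfolding f_def f'_def by (intro add_mono) auto
    finally show ?thesis by simp
  qed
  define a where "a = sqrt (p2*p1) / \<rho>"
  define w' where "w' = (\<lambda>g. w g * f g / \<rho>)"
  have w': "w' AB = a" "w' AC = a" "w' BC = p2 / \<rho>" "\<And>g. w' g \<ge> 0"
    unfolding w'_def a_def f_def using w hz rpos wnn zpos by auto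
  have tot: "2*a + w' BC = 1"
  proof -
    have "2*a + w' BC = (2 * sqrt (p2*p1) + p2) / \<rho>" unfolding w'(3) a_def by (simp add: add_divide_distrib)
    then show ?thesis using rpos rho by simp
  qed
  have apos: "a > 0" unfolding a_def using p rpos by simp
  define c where "c = a * (p2/\<rho>) / z"
  have cpos: "c > 0" unfolding c_def using apos p rpos zpos by simp
  have low: "c * \<rho>^L / (L+1) \<le> fail_prob t L" if L: "L \<ge> 1" for L
  proof -
    let ?E = "{xs\<in>LS L. N AC xs = N AB xs + 1}"
    have pw: "prod_list (map w xs) = \<rho>^L / z * prod_list (map w' xs)" if "xs \<in> ?E" for xs
    proof -
      have len: "length xs = L" and nn: "N AC xs = N AB xs + 1" using that by (auto simp: LS_len)
      have "prod_list (map w' xs) = prod_list (map w xs) * prod_list (map f xs) * prod_list (map (\<lambda>_. 1/\<rho>) xs)"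
        unfolding w'_def by (induction xs) (simp_all add: mult_ac)
      also have "prod_list (map f xs) = z"
        unfolding f_def using prod_f[of AC AB z xs] nn zpos by (simp add: power_add field_simps power_one_over)
      also have "prod_list (map (\<lambda>_. 1/\<rho>) xs) = (1/\<rho>)^L" using len by (induction xs arbitrary: L) auto
      finally show ?thesis using rpos zpos by (simp add: field_simps power_one_over)
    qed
    have "c * \<rho>^L / (L+1) = \<rho>^L / z * (a * w' BC / (L+1))" unfolding c_def w'(3) by (simp add: field_simps)
    also have "\<dots> \<le> \<rho>^L / z * (\<Sum>xs\<in>?E. prod_list (map w' xs))"
      using sym_lower[OF w'(1,2,4) tot L] rpos zpos by (intro mult_left_mono) auto
    also have "\<dots> = (\<Sum>xs\<in>?E. prod_list (map w xs))"
      by (simp add: sum_distrib_left pw)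
    also have "\<dots> \<le> fail_prob t L"
      unfolding FP by (intro sum_mono2) (auto simp: finite_LS less_max_iff_disj intro!: prod_list_nonneg' wnn)
    finally show ?thesis .
  qed
  show ?thesis using cpos rpos low up by blast
qed

lemma limit_part:
  fixes t :: real assumes t: "t \<ge> 0"
  shows "(\<lambda>L::nat. - (ln (fail_prob t L) / real L)) \<longlonglongrightarrow> alpha_Rstar t"
proof -
  define \<rho> where "\<rho> = 2 * sqrt (1/3 * exp (-t) * (1 - 2/3 * exp (-t))) + 1/3 * exp (-t)"
  obtain c where c: "c > 0" "\<rho> > 0" and B: "\<And>L. L \<ge> 1 \<Longrightarrow> c * \<rho>^L / (L+1) \<le> fail_prob t L \<and> fail_prob t L \<le> 2 * \<rho>^L"
    using bounds[OF t] unfolding \<rho>_def by blast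
  have al: "alpha_Rstar t = - ln \<rho>" unfolding alpha_Rstar_def \<rho>_def by simp
  have lo: "alpha_Rstar t - ln 2 / real L \<le> - (ln (fail_prob t L) / real L)" if L: "L \<ge> 1" for L
  proof -
    have "c * \<rho>^L / (L+1) > 0" using c by simp
    then have fpos: "fail_prob t L > 0" using B[OF L] by linarith
    have "ln (fail_prob t L) \<le> ln (2 * \<rho>^L)" using B[OF L] fpos by simp
    also have "\<dots> = ln 2 + L * ln \<rho>" using c by (simp add: ln_mult ln_realpow)
    finally have "ln (fail_prob t L) \<le> ln 2 + L * ln \<rho>" .
    then have "ln (fail_prob t L) / L \<le> ln 2 / L + ln \<rho>" using L by (simp add: field_simps)
    then show ?thesis unfolding al by simp
  qed
  have hi: "- (ln (fail_prob t L) / real L) \<le> alpha_Rstar t - ln c / real L + ln (real L + 1) / real L" if L: "L \<ge> 1" for L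
  proof -
    have pos: "c * \<rho>^L / (L+1) > 0" using c by simp
    have "ln c + L * ln \<rho> - ln (real L + 1) = ln (c * \<rho>^L / (L+1))"
      using c by (simp add: ln_mult ln_div ln_realpow)
    also have "\<dots> \<le> ln (fail_prob t L)" using B[OF L] pos by simp
    finally have "ln c + L * ln \<rho> - ln (real L + 1) \<le> ln (fail_prob t L)" .
    then have "(ln c + L * ln \<rho> - ln (real L + 1)) / L \<le> ln (fail_prob t L) / L"
      using L by (intro divide_right_mono) auto
    then have "ln c / L + ln \<rho> - ln (real L + 1) / L \<le> ln (fail_prob t L) / L"
      using L by (simp add: diff_divide_distrib add_divide_distrib)
    then show ?thesis unfolding al by simp
  qed
  have l1: "(\<lambda>L::nat. alpha_Rstar t - ln 2 / real L) \<longlonglongrightarrow> alpha_Rstar t - 0"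
    by (intro tendsto_diff tendsto_const lim_const_over_n)
  have l3: "(\<lambda>L::nat. ln (real L + 1) / real L) \<longlonglongrightarrow> 0" by real_asymp
  have l2: "(\<lambda>L::nat. alpha_Rstar t - ln c / real L + ln (real L + 1) / real L) \<longlonglongrightarrow> alpha_Rstar t - 0 + 0"
    by (intro tendsto_add tendsto_diff tendsto_const lim_const_over_n l3)
  show ?thesis
    by (rule tendsto_sandwich[OF _ _ l1[simplified] l2[simplified]])
       (use lo hi in \<open>auto intro: eventually_sequentiallyI[of 1]\<close>)
qed

lemma alpha_alt: "alpha_Rstar t = - ln ((2 * sqrt (exp (- t) * (3 - 2 * exp (- t))) + exp (- t))/3)"
proof -
  have "1/3 * exp (-t) * (1 - 2/3 * exp (-t)) = (exp (- t) * (3 - 2 * exp (- t))) / 9"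
    by (simp add: field_simps)
  moreover have s9: "sqrt 9 = (3::real)" by (rule real_sqrt_unique) auto
  ultimately have h: "sqrt (1/3 * exp (-t) * (1 - 2/3 * exp (-t))) = sqrt (exp (- t) * (3 - 2 * exp (- t))) / 3"
    by (simp only: real_sqrt_divide s9)
  have "2 * (sqrt (exp (- t) * (3 - 2 * exp (- t))) / 3) + 1/3 * exp (-t)
      = (2 * sqrt (exp (- t) * (3 - 2 * exp (- t))) + exp (- t))/3" by (simp add: field_simps)
  then show ?thesis unfolding alpha_Rstar_def h by (simp only:)
qed

lemma part2: "(\<lambda>t. alpha_Rstar t - 3/4 * t ^ 2) \<in> O[at_right 0](\<lambda>t. t ^ 3)"
  unfolding alpha_alt by real_asymp

lemma part3: "((\<lambda>t. alpha_Rstar t - t / 2) \<longlongrightarrow> - (1/2) * ln (4/3)) at_top"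
proof -
  have "((\<lambda>t. alpha_Rstar t - t / 2) \<longlongrightarrow> - ln (2 * 3 powr (1 / 2) / 3)) at_top"
    unfolding alpha_alt by real_asymp
  moreover have "- ln (2 * 3 powr (1 / 2) / 3::real) = - (1/2) * ln (4/3)"
  proof -
    have "ln (4::real) = 2 * ln 2" using ln_mult[of 2 2] by simp
    moreover have "ln (sqrt 3) = ln (3::real) / 2" by (simp add: ln_sqrt)
    ultimately show ?thesis by (simp add: ln_mult ln_div ln_powr powr_half_sqrt) (simp add: field_simps)
  qed
  ultimately show ?thesis by simp
qed

theorem mainTheorem2:
  shows "(\<forall>t::real. t \<ge> 0 \<longrightarrow>
            (\<lambda>L::nat. - (ln (fail_prob t L) / real L)) \<longlonglongrightarrow> alpha_Rstar t)
       \<and> (\<lambda>t. alpha_Rstar t - 3/4 * t ^ 2) \<in> O[at_right 0](\<lambda>t. t ^ 3)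
       \<and> ((\<lambda>t. alpha_Rstar t - t / 2) \<longlongrightarrow> - (1/2) * ln (4/3)) at_top"
  using limit_part part2 part3 by blast

end
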